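(* For $t\in(0,1)$ and $c\in\mathbb{R}$ define the $2\times2$ matrix $T_1(c,t)$ with entries $(T_1)_{11}=12c-\frac38\sqrt2$, $(T_1)_{12}=12c-\frac{3(t+3)}{(3t^2+2t+3)^{3/2}}-\frac{\sqrt3}{3(t-1)^2}$, $(T_1)_{21}=12ct-\frac{3(3t+1)}{(3t^2+2t+3)^{3/2}}+\frac{\sqrt3t-\sqrt3}{3(t-1)^3}$, $(T_1)_{22}=12ct-\frac{3\sqrt2}{8t^2}$, so that $\det T_1=\alpha_1(t)c+\alpha_0(t)$ with $$\alpha_1(t)=-\frac12\left(9\sqrt2\,t-\frac{72(t^2+6t+1)}{(3t^2+2t+3)^{3/2}}-\frac{8\sqrt3}{t-1}+\frac{9\sqrt2}{t^2}\right),$$ $$\alpha_0(t)=-\frac{9(3t+1)(t+3)}{(3t^2+2t+3)^3}-\frac{2\sqrt3}{(3t^2+2t+3)^{3/2}(t-1)}+\frac{9}{32t^2}+\frac{1}{3(t-1)^4}.$$ Then: (i) $\alpha_1(t)<0$ for $t\in(0,1)$; (ii) $\alpha_0(t)>0$ for $t\in(0,1)$; (iii) $c(t):=-\alpha_0(t)/\alpha_1(t)>0$ for $t\in(0,1)$; (iv) $(T_1)_{11}(c(t),t)>0$ for $t\in(0,1)$; (v) there exists $\delta<1$ such that $(T_1)_{12}(c(t),t)<0$ for $t\in(0,\delta)$ and $(T_1)_{12}(c(t),t)>0$ for $t\in(\delta,1)$. *)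

theory Defs
  imports "HOL-Analysis.Analysis"
begin

definition q :: "real \<Rightarrow> real" where
  "q t = 3*t^2 + 2*t + 3"

definition T1_11 :: "real \<Rightarrow> real \<Rightarrow> real" where
  "T1_11 c t = 12*c - 3/8 * sqrt 2"
definition T1_12 :: "real \<Rightarrow> real \<Rightarrow> real" where
  "T1_12 c t = 12*c - 3*(t+3) / (q t powr (3/2)) - sqrt 3 / (3*(t-1)^2)"
definition T1_21 :: "real \<Rightarrow> real \<Rightarrow> real" where
  "T1_21 c t = 12*c*t - 3*(3*t+1) / (q t powr (3/2)) + (sqrt 3 * t - sqrt 3) / (3*(t-1)^3)"
definition T1_22 :: "real \<Rightarrow> real \<Rightarrow> real" where
  "T1_22 c t = 12*c*t - 3 * sqrt 2 / (8*t^2)"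

definition T1 :: "real \<Rightarrow> real \<Rightarrow> real^2^2" where
  "T1 c t = (\<chi> i j. if i = 1 then (if j = 1 then T1_11 c t else T1_12 c t)
                     else (if j = 1 then T1_21 c t else T1_22 c t))"

definition alpha1 :: "real \<Rightarrow> real" where
  "alpha1 t = -(1/2) * (9 * sqrt 2 * t - 72*(t^2+6*t+1) / (q t powr (3/2))
                         - 8 * sqrt 3 / (t-1) + 9 * sqrt 2 / t^2)"

definition alpha0 :: "real \<Rightarrow> real" where
  "alpha0 t = - 9*(3*t+1)*(t+3) / (q t)^3
              - 2 * sqrt 3 / (q t powr (3/2) * (t-1))
              + 9 / (32*t^2) + 1 / (3*(t-1)^4)"

definition cfun :: "real \<Rightarrow> real" where
  "cfun t = - alpha0 t / alpha1 t"

end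

theory Submission
  imports Defs
begin
definition u :: "real \<Rightarrow> real" where "u t = sqrt (q t)"

lemma q_pos: "0 < q t"
proof -
  have "3*t^2+2*t+3 = 3*(t+1/3)^2 + 8/3" by (simp add: power2_eq_square algebra_simps)
  moreover have "(t+1/3)^2 \<ge> 0" by simp
  ultimately show ?thesis unfolding q_def by linarith
qed
lemma u_pos: "0 < u t" by (simp add: u_def q_pos)
lemma u_sq: "u t ^ 2 = q t" using q_pos by (simp add: u_def less_imp_le)
lemma powr32: "q t powr (3/2) = u t ^ 3"
proof -
  have "q t powr (3/2) = q t powr (1 + 1/2)" by simp
  also have "\<dots> = q t powr 1 * q t powr (1/2)" by (rule powr_add)
  also have "\<dots> = q t * q t powr (1/2)" using q_pos[of t] by simp
  also have "\<dots> = u t ^ 2 * u t"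
  proof -
    have h: "q t powr (1/2) = u t" using q_pos[of t] by (simp add: powr_half_sqrt u_def)
    show ?thesis by (simp add: h u_sq)
  qed
  finally show ?thesis by (simp add: power2_eq_square power3_eq_cube)
qed
lemma q3: "(q t)^3 = u t ^ 6"
  by (metis u_sq power_mult numeral_times_numeral semiring_norm(12) semiring_norm(13) num_double) 

lemma q_mono: "0 \<le> a \<Longrightarrow> a \<le> t \<Longrightarrow> q a \<le> q t"
proof -
  assume "0 \<le> a" "a \<le> t"
  then have "a^2 \<le> t^2" by (intro power_mono) auto
  then show ?thesis using \<open>a \<le> t\<close> unfolding q_def by linarith
qed
lemma u_lb: "0 \<le> ul \<Longrightarrow> ul^2 \<le> q a \<Longrightarrow> 0 \<le> a \<Longrightarrow> a \<le> t \<Longrightarrow> ul \<le> u t"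
  unfolding u_def by (rule real_le_rsqrt) (meson order_trans q_mono)
lemma u_ub: "0 \<le> uh \<Longrightarrow> q b \<le> uh^2 \<Longrightarrow> 0 \<le> t \<Longrightarrow> t \<le> b \<Longrightarrow> u t \<le> uh"
  unfolding u_def by (rule real_le_lsqrt) (auto intro: order_trans q_mono)

lemma s2l: "1414213/1000000 \<le> sqrt 2" by (rule real_le_rsqrt) (simp add: power_divide)
lemma s2h: "sqrt 2 \<le> 1414214/1000000" by (rule real_le_lsqrt) (simp_all add: power_divide)
lemma s3l: "1732050/1000000 \<le> sqrt 3" by (rule real_le_rsqrt) (simp add: power_divide)
lemma s3h: "sqrt 3 \<le> 1732051/1000000" by (rule real_le_lsqrt) (simp_all add: power_divide)
lemma s6l: "2449489/1000000 \<le> sqrt 2 * sqrt 3" unfolding real_sqrt_mult[symmetric] by (rule real_le_rsqrt) (simp add: power_divide)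
lemma s6h: "sqrt 2 * sqrt 3 \<le> 2449490/1000000" unfolding real_sqrt_mult[symmetric] by (rule real_le_lsqrt) (simp_all add: power_divide)

lemma alpha1_u: "t \<noteq> 1 \<Longrightarrow> alpha1 t = - (9/2* sqrt 2*t - 36*(t^2+6*t+1)/u t^3 + 4* sqrt 3/(1-t) + 9/2* sqrt 2/t^2)"
proof -
  assume "t \<noteq> 1"
  then have "1 - t \<noteq> 0" "t - 1 \<noteq> 0" by auto
  have e: "8 * sqrt 3 / (t - 1) = - (8 * sqrt 3 / (1 - t))"
    using \<open>1 - t \<noteq> 0\<close> \<open>t - 1 \<noteq> 0\<close> by (simp add: field_simps)
  show ?thesis unfolding alpha1_def powr32 e by (simp add: field_simps)
qed
lemma alpha0_u: "t \<noteq> 1 \<Longrightarrow> alpha0 t = -9*((3*t+1)*(t+3))/u t^6 + 2* sqrt 3/(u t^3*(1-t)) + 9/(32*t^2) + 1/(3*(1-t)^4)"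
proof -
  assume "t \<noteq> 1"
  then have "1 - t \<noteq> 0" "t - 1 \<noteq> 0" by auto
  have e: "2 * sqrt 3 / (u t ^ 3 * (t - 1)) = - (2 * sqrt 3 / (u t^3 * (1 - t)))"
    using \<open>1 - t \<noteq> 0\<close> \<open>t - 1 \<noteq> 0\<close> u_pos[of t] by (simp add: field_simps)
  have e2: "(t-1)^4 = (1-t)^4" by (simp add: power4_eq_xxxx algebra_simps)
  show ?thesis unfolding alpha0_def powr32 q3 e e2 by (simp add: field_simps)
qed

lemma A1_lb:
  assumes "0 \<le> a" "a \<le> t" "t \<le> b" "0 < t" "t < 1" "a < 1" "0 < ul" "ul^2 \<le> q a"
  shows "9/2*(1414213/1000000)*a - 36*(b^2+6*b+1)/ul^3 + 4*(1732050/1000000)/(1-a) + 9/2*(1414213/1000000)/b^2 \<le> - alpha1 t"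
proof -
  have ul: "ul \<le> u t" using u_lb assms by auto
  have 1: "9/2*(1414213/1000000)*a \<le> 9/2* sqrt 2*t" using s2l assms by (intro mult_mono) auto
  have "t^2 \<le> b^2" using assms by (intro power_mono) auto
  then have "t^2+6*t+1 \<le> b^2+6*b+1" using assms by linarith
  then have "36*(t^2+6*t+1) \<le> 36*(b^2+6*b+1)" by (rule mult_left_mono) simp
  then have 2: "36*(t^2+6*t+1)/u t^3 \<le> 36*(b^2+6*b+1)/ul^3"
    using assms ul by (intro frac_le power_mono) auto
  have 3: "4*(1732050/1000000)/(1-a) \<le> 4* sqrt 3/(1-t)" using assms s3l by (intro frac_le) auto
  have "t^2 \<le> b^2" using assms by (intro power_mono) auto
  then have 4: "9/2*(1414213/1000000)/b^2 \<le> 9/2* sqrt 2/t^2" using assms s2l by (intro frac_le) auto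
  show ?thesis using 1 2 3 4 alpha1_u[of t] assms by linarith
qed
definition Hf :: "real \<Rightarrow> real" where
  "Hf t = 12 * alpha0 t + (3*(t+3) / (q t powr (3/2)) + sqrt 3 / (3*(t-1)^2)) * alpha1 t"

lemma Hf_u:
  assumes "0 < t" "t < 1"
  shows "Hf t = 4*t/(1-t)^4 - 3/2*(sqrt 2 * sqrt 3)*(t/(1-t)^2) - 3/2*(sqrt 2 * sqrt 3)/(t^2*(1-t)^2)
     + 27/(8*t^2) + 108*(t*(t+3)^2)/u t^6 - 27/2 * sqrt 2*(t+3)/(u t^3*t^2)
     + 24 * sqrt 3*(t*(t+3))/(u t^3*(1-t)^2) - 27/2 * sqrt 2*(t*(t+3))/u t^3"
proof -
  have t1: "t \<noteq> 1" using assms by auto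
  have e2: "(t-1)^2 = (1-t)^2" by (simp add: power2_commute)
  have h: "inverse (1-t) * (1-t) = 1" "inverse t * t = 1" "sqrt 2 ^2 = 2" "sqrt 3^2 = 3"
    using assms by auto
  show ?thesis unfolding Hf_def alpha0_u[OF t1] alpha1_u[OF t1] powr32 e2
    apply (simp only: divide_inverse inverse_mult_distrib power_inverse[symmetric])
    using h apply algebra
    done
qed

lemma f_u:
  assumes "0 < t" "t < 1"
  shows "alpha0 t + sqrt 2/32 * alpha1 t = -9*((3*t+1)*(t+3))/u t^6 + 2 * sqrt 3/(u t^3*(1-t)) + 1/(3*(1-t)^4)
     - 9/32*t + 9/8 * sqrt 2*(t^2+6*t+1)/u t^3 - (sqrt 2 * sqrt 3)/(8*(1-t))"
proof -
  have t1: "t \<noteq> 1" using assms by auto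
  have h: "inverse (1-t) * (1-t) = 1" "inverse t * t = 1" "sqrt 2 ^2 = 2" "sqrt 3^2 = 3"
    using assms by auto
  show ?thesis unfolding alpha0_u[OF t1] alpha1_u[OF t1]
    apply (simp only: divide_inverse inverse_mult_distrib power_inverse[symmetric])
    using h apply algebra
    done
qed

lemma det_T1:
  assumes "0 < t" "t < 1"
  shows "det (T1 c t) = alpha1 t * c + alpha0 t"
proof -
  have t1: "t \<noteq> 1" using assms by auto
  have h: "inverse (1-t) * (1-t) = 1" "inverse (t-1) * (t-1) = 1" "inverse t * t = 1" "sqrt 2 ^2 = 2" "sqrt 3^2 = 3"
    using assms by auto
  have d: "det (T1 c t) = T1_11 c t * T1_22 c t - T1_12 c t * T1_21 c t"
    unfolding det_2 by (simp add: T1_def)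
  show ?thesis unfolding d alpha0_u[OF t1] alpha1_u[OF t1] T1_11_def T1_12_def T1_21_def T1_22_def powr32
    apply (simp only: divide_inverse inverse_mult_distrib power_inverse[symmetric])
    using h apply algebra
    done
qed

lemma T12_rel: "alpha1 t \<noteq> 0 \<Longrightarrow> T1_12 (cfun t) t = - Hf t / alpha1 t"
  unfolding T1_12_def cfun_def Hf_def by (simp add: field_simps)

lemma T11_rel: "alpha1 t \<noteq> 0 \<Longrightarrow> T1_11 (cfun t) t = 12 * (alpha0 t + sqrt 2/32 * alpha1 t) / (- alpha1 t)"
  unfolding T1_11_def cfun_def by (simp add: field_simps)

lemma sq_mono: "0 \<le> a \<Longrightarrow> a \<le> t \<Longrightarrow> a^2 \<le> t^2" for a t :: real by (intro power_mono) auto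

lemma grp: "x \<noteq> 0 \<Longrightarrow> (1/x)*(1/(3*x^3) - s/8) = 1/(3*x^4) - s/(8*x)" for x s :: real
  by (simp add: field_simps eval_nat_numeral)

lemma A0_lb:
  assumes "0 \<le> a" "a \<le> t" "t \<le> b" "0 < t" "t < 1" "a < 1" "0 < ul" "ul^2 \<le> q a" "0 < uh" "q b \<le> uh^2"
  shows "-9*((3*b+1)*(b+3))/ul^6 + 2*(1732050/1000000)/(uh^3*(1-a)) + 9/(32*b^2) + 1/(3*(1-a)^4) \<le> alpha0 t"
proof -
  have ul: "ul \<le> u t" using u_lb assms by auto
  have uh: "u t \<le> uh" using u_ub assms by auto
  have up: "0 < u t" by (rule u_pos)
  have "t^2 \<le> b^2" using assms sq_mono by auto
  then have "(3*t+1)*(t+3) \<le> (3*b+1)*(b+3)" using assms by (simp add: algebra_simps power2_eq_square) 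
  then have 1: "9*((3*t+1)*(t+3))/u t^6 \<le> 9*((3*b+1)*(b+3))/ul^6"
    using assms ul by (intro frac_le power_mono) auto
  have "u t^3*(1-t) \<le> uh^3*(1-a)" using assms uh up by (intro mult_mono power_mono) auto
  then have 2: "2*(1732050/1000000)/(uh^3*(1-a)) \<le> 2 * sqrt 3/(u t^3*(1-t))"
    using assms s3l up by (intro frac_le) auto
  have "t^2 \<le> b^2" using assms sq_mono by auto
  then have 3: "9/(32*b^2) \<le> 9/(32*t^2)" using assms by (intro frac_le) auto
  have "(1-t)^4 \<le> (1-a)^4" using assms by (intro power_mono) auto
  then have 4: "1/(3*(1-a)^4) \<le> 1/(3*(1-t)^4)" using assms by (intro frac_le) auto
  have "alpha0 t = -9*((3*t+1)*(t+3))/u t^6 + 2 * sqrt 3/(u t^3*(1-t)) + 9/(32*t^2) + 1/(3*(1-t)^4)"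
    using alpha0_u assms by auto
  then show ?thesis using 1 2 3 4 by linarith
qed

lemma F_lb:
  assumes "0 \<le> a" "a \<le> t" "t \<le> b" "0 < t" "t < 1" "a < 1" "0 < ul" "ul^2 \<le> q a" "0 < uh" "q b \<le> uh^2"
    and G: "0 \<le> 1/(3*(1-a)^3) - (2449490/1000000)/8"
  shows "-9*((3*b+1)*(b+3))/ul^6 + 2*(1732050/1000000)/(uh^3*(1-a)) - 9/32*b
     + 9/8*(1414213/1000000)*(a^2+6*a+1)/uh^3 + (1/(1-a))*(1/(3*(1-a)^3) - (2449490/1000000)/8)
     \<le> alpha0 t + sqrt 2/32 * alpha1 t"
proof -
  have ul: "ul \<le> u t" using u_lb assms by auto
  have uh: "u t \<le> uh" using u_ub assms by auto
  have up: "0 < u t" by (rule u_pos)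
  have "t^2 \<le> b^2" using assms sq_mono by auto
  then have "(3*t+1)*(t+3) \<le> (3*b+1)*(b+3)" using assms by (simp add: algebra_simps power2_eq_square) 
  then have 1: "9*((3*t+1)*(t+3))/u t^6 \<le> 9*((3*b+1)*(b+3))/ul^6"
    using assms ul by (intro frac_le power_mono) auto
  have "u t^3*(1-t) \<le> uh^3*(1-a)" using assms uh up by (intro mult_mono power_mono) auto
  then have 2: "2*(1732050/1000000)/(uh^3*(1-a)) \<le> 2 * sqrt 3/(u t^3*(1-t))"
    using assms s3l up by (intro frac_le) auto
  have "a^2 \<le> t^2" using assms sq_mono by auto
  then have "a^2+6*a+1 \<le> t^2+6*t+1" using assms by linarith
  then have "9/8*(1414213/1000000)*(a^2+6*a+1) \<le> 9/8 * sqrt 2*(t^2+6*t+1)"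
    using s2l assms by (intro mult_mono) auto
  then have 3: "9/8*(1414213/1000000)*(a^2+6*a+1)/uh^3 \<le> 9/8 * sqrt 2*(t^2+6*t+1)/u t^3"
    using assms up uh by (intro frac_le power_mono) auto
  have "(1-t)^3 \<le> (1-a)^3" using assms by (intro power_mono) auto
  then have "1/(3*(1-a)^3) \<le> 1/(3*(1-t)^3)" using assms by (intro frac_le) auto
  then have g: "1/(3*(1-a)^3) - (2449490/1000000)/8 \<le> 1/(3*(1-t)^3) - (sqrt 2 * sqrt 3)/8"
    using s6h by linarith
  have "1/(1-a) \<le> 1/(1-t)" using assms by (intro frac_le) auto
  then have "(1/(1-a))*(1/(3*(1-a)^3) - (2449490/1000000)/8) \<le> (1/(1-t))*(1/(3*(1-t)^3) - (sqrt 2 * sqrt 3)/8)"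
    using g G assms by (intro mult_mono) auto
  also have "\<dots> = 1/(3*(1-t)^4) - (sqrt 2 * sqrt 3)/(8*(1-t))"
    using assms by (intro grp) auto
  finally have 4: "(1/(1-a))*(1/(3*(1-a)^3) - (2449490/1000000)/8) \<le> 1/(3*(1-t)^4) - (sqrt 2 * sqrt 3)/(8*(1-t))" .
  have "b * 9/32 \<ge> t * 9/32" using assms by simp
  then show ?thesis using 1 2 3 4 f_u[of t] assms by linarith
qed

lemma grpH: "x \<noteq> 0 \<Longrightarrow> t \<noteq> 0 \<Longrightarrow> - 3/2*w/(t^2*x^2) + 27/(8*t^2) = (27/8 - 3/2*w/x^2)/t^2" for x t w :: real
  by (simp add: field_simps)

lemma Hu_ub:
  assumes "0 \<le> a" "a \<le> t" "t \<le> b" "0 < t" "b < 1" "0 < ul" "ul^2 \<le> q a" "0 < uh" "q b \<le> uh^2"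
    and N0: "27/8 - 3/2*(2449489/1000000)/(1-a)^2 \<le> 0"
  shows "Hf t \<le> 4*b/(1-b)^4 - 3/2*(2449489/1000000)*a/(1-a)^2 + (27/8 - 3/2*(2449489/1000000)/(1-a)^2)/b^2
     + 108*(b*(b+3)^2)/ul^6 - 27/2*(1414213/1000000)*(a+3)/(uh^3*b^2)
     + 24*(1732051/1000000)*(b*(b+3))/(ul^3*(1-b)^2) - 27/2*(1414213/1000000)*(a*(a+3))/uh^3"
proof -
  have t1: "t < 1" using assms by auto
  have ul: "ul \<le> u t" using u_lb assms by auto
  have uh: "u t \<le> uh" using u_ub assms by auto
  have up: "0 < u t" by (rule u_pos)
  have s6: "2449489/1000000 \<le> sqrt 2 * sqrt 3" by (rule s6l)
  have x4: "(1-b)^4 \<le> (1-t)^4" "(1-b)^2 \<le> (1-t)^2" "(1-t)^2 \<le> (1-a)^2" using assms by (intro power_mono; simp)+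
  have tt: "t^2 \<le> b^2" using assms sq_mono by auto
  have 1: "4*t/(1-t)^4 \<le> 4*b/(1-b)^4" using assms x4 by (intro frac_le) auto
  have "(2449489/1000000)*(a/(1-a)^2) \<le> (sqrt 2 * sqrt 3)*(t/(1-t)^2)"
    using assms s6 x4 by (intro mult_mono frac_le) auto
  then have 2: "- 3/2*(sqrt 2 * sqrt 3)*(t/(1-t)^2) \<le> - 3/2*(2449489/1000000)*a/(1-a)^2" by simp
  have "(2449489/1000000)/(1-a)^2 \<le> (sqrt 2 * sqrt 3)/(1-t)^2"
    using assms s6 x4 by (intro frac_le) auto
  then have "(27/8 - 3/2*(sqrt 2 * sqrt 3)/(1-t)^2) \<le> 27/8 - 3/2*(2449489/1000000)/(1-a)^2" by simp
  then have "(27/8 - 3/2*(sqrt 2 * sqrt 3)/(1-t)^2)/t^2 \<le> (27/8 - 3/2*(2449489/1000000)/(1-a)^2)/t^2"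
    by (intro divide_right_mono) auto
  also have "\<dots> \<le> (27/8 - 3/2*(2449489/1000000)/(1-a)^2)/b^2"
  proof -
    define N where "N = 27/8 - 3/2*(2449489/1000000)/(1-a)^2"
    have "(-N)/b^2 \<le> (-N)/t^2"
      using N0 tt assms unfolding N_def[symmetric] by (intro frac_le) auto
    then have "N/t^2 \<le> N/b^2" by (simp add: minus_divide_left[symmetric])
    then show ?thesis unfolding N_def .
  qed
  finally have 3: "- 3/2*(sqrt 2 * sqrt 3)/(t^2*(1-t)^2) + 27/(8*t^2) \<le> (27/8 - 3/2*(2449489/1000000)/(1-a)^2)/b^2"
    using grpH[of "1-t" t "sqrt 2 * sqrt 3"] assms by auto
  have "(t+3)^2 \<le> (b+3)^2" using assms by (intro power_mono) auto
  then have "t*(t+3)^2 \<le> b*(b+3)^2" using assms by (intro mult_mono) auto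
  then have 5: "108*(t*(t+3)^2)/u t^6 \<le> 108*(b*(b+3)^2)/ul^6"
    using assms ul by (intro frac_le power_mono) auto
  have "27/2*(1414213/1000000)*(a+3) \<le> 27/2 * sqrt 2*(t+3)" using s2l assms by (intro mult_mono) auto
  moreover have "u t^3*t^2 \<le> uh^3*b^2" using uh up tt assms by (intro mult_mono power_mono) auto
  ultimately have 6: "27/2*(1414213/1000000)*(a+3)/(uh^3*b^2) \<le> 27/2 * sqrt 2*(t+3)/(u t^3*t^2)"
    using up assms by (intro frac_le) auto
  have "t*(t+3) \<le> b*(b+3)" using assms by (intro mult_mono) auto
  then have "24 * sqrt 3*(t*(t+3)) \<le> 24*(1732051/1000000)*(b*(b+3))" using s3h assms by (intro mult_mono) auto
  moreover have "ul^3*(1-b)^2 \<le> u t^3*(1-t)^2" using ul up x4 assms by (intro mult_mono power_mono) auto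
  ultimately have 7: "24 * sqrt 3*(t*(t+3))/(u t^3*(1-t)^2) \<le> 24*(1732051/1000000)*(b*(b+3))/(ul^3*(1-b)^2)"
    using assms by (intro frac_le) auto
  have "a*(a+3) \<le> t*(t+3)" using assms by (intro mult_mono) auto
  then have "27/2*(1414213/1000000)*(a*(a+3)) \<le> 27/2 * sqrt 2*(t*(t+3))" using s2l assms by (intro mult_mono) auto
  then have 8: "27/2*(1414213/1000000)*(a*(a+3))/uh^3 \<le> 27/2 * sqrt 2*(t*(t+3))/u t^3"
    using up uh assms by (intro frac_le power_mono) auto
  show ?thesis using Hf_u[of t] assms 1 2 3 5 6 7 8 by linarith
qed

lemma Hl_lb:
  assumes "0 < a" "a \<le> t" "t \<le> b" "b < 1" "0 < ul" "ul^2 \<le> q a" "0 < uh" "q b \<le> uh^2"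
  shows "4*a/(1-a)^4 - 3/2*(2449490/1000000)*b/(1-b)^2 - 3/2*(2449490/1000000)/(a^2*(1-b)^2) + 27/(8*b^2)
     + 108*(a*(a+3)^2)/uh^6 - 27/2*(1414214/1000000)*(b+3)/(ul^3*a^2)
     + 24*(1732050/1000000)*(a*(a+3))/(uh^3*(1-a)^2) - 27/2*(1414214/1000000)*(b*(b+3))/ul^3 \<le> Hf t"
proof -
  have t0: "0 < t" using assms by auto
  have ul: "ul \<le> u t" using u_lb assms by auto
  have uh: "u t \<le> uh" using u_ub assms by auto
  have up: "0 < u t" by (rule u_pos)
  have s6: "sqrt 2 * sqrt 3 \<le> 2449490/1000000" by (rule s6h)
  have x4: "(1-t)^4 \<le> (1-a)^4" "(1-b)^2 \<le> (1-t)^2" "(1-t)^2 \<le> (1-a)^2" using assms by (intro power_mono; simp)+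
  have tt: "t^2 \<le> b^2" "a^2 \<le> t^2" using assms sq_mono by auto
  have 1: "4*a/(1-a)^4 \<le> 4*t/(1-t)^4" using assms x4 by (intro frac_le) auto
  have 2: "3/2*(sqrt 2 * sqrt 3)*(t/(1-t)^2) \<le> 3/2*(2449490/1000000)*(b/(1-b)^2)"
    using assms s6 x4 by (intro mult_mono frac_le) auto
  have "a^2*(1-b)^2 \<le> t^2*(1-t)^2" using tt x4 assms by (intro mult_mono) auto
  then have 3: "3/2*(sqrt 2 * sqrt 3)/(t^2*(1-t)^2) \<le> 3/2*(2449490/1000000)/(a^2*(1-b)^2)"
    using assms s6 by (intro frac_le) auto
  have 4: "27/(8*b^2) \<le> 27/(8*t^2)" using tt assms by (intro frac_le) auto
  have "(a+3)^2 \<le> (t+3)^2" using assms by (intro power_mono) auto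
  then have "a*(a+3)^2 \<le> t*(t+3)^2" using assms by (intro mult_mono) auto
  then have 5: "108*(a*(a+3)^2)/uh^6 \<le> 108*(t*(t+3)^2)/u t^6"
    using assms up uh by (intro frac_le power_mono) auto
  have "27/2 * sqrt 2*(t+3) \<le> 27/2*(1414214/1000000)*(b+3)" using s2h assms by (intro mult_mono) auto
  moreover have "ul^3*a^2 \<le> u t^3*t^2" using ul tt assms by (intro mult_mono power_mono) auto
  ultimately have 6: "27/2 * sqrt 2*(t+3)/(u t^3*t^2) \<le> 27/2*(1414214/1000000)*(b+3)/(ul^3*a^2)"
    using assms by (intro frac_le) auto
  have "a*(a+3) \<le> t*(t+3)" using assms by (intro mult_mono) auto
  then have "24*(1732050/1000000)*(a*(a+3)) \<le> 24 * sqrt 3*(t*(t+3))" using s3l assms by (intro mult_mono) auto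
  moreover have "u t^3*(1-t)^2 \<le> uh^3*(1-a)^2" using uh up x4 assms by (intro mult_mono power_mono) auto
  ultimately have 7: "24*(1732050/1000000)*(a*(a+3))/(uh^3*(1-a)^2) \<le> 24 * sqrt 3*(t*(t+3))/(u t^3*(1-t)^2)"
    using assms up by (intro frac_le) auto
  have "t*(t+3) \<le> b*(b+3)" using assms by (intro mult_mono) auto
  then have "27/2 * sqrt 2*(t*(t+3)) \<le> 27/2*(1414214/1000000)*(b*(b+3))" using s2h assms by (intro mult_mono) auto
  then have 8: "27/2 * sqrt 2*(t*(t+3))/u t^3 \<le> 27/2*(1414214/1000000)*(b*(b+3))/ul^3"
    using ul assms by (intro frac_le power_mono) auto
  show ?thesis using Hf_u[of t] assms t0 1 2 3 4 5 6 7 8 by linarith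
qed

lemma grpH1: "x \<noteq> 0 \<Longrightarrow> t \<noteq> 0 \<Longrightarrow> 4*t/x^4 - 3/2*w*(t/x^2) - 3/2*w/(t^2*x^2) = (4*t/x^2 - 3/2*w*(t + 1/t^2))/x^2" for x t w :: real
  by (simp add: field_simps eval_nat_numeral)

lemma Hl1_lb:
  assumes "0 < a" "a \<le> t" "t < 1" "0 < ul" "ul^2 \<le> q a" "0 < uh" "q 1 \<le> uh^2"
    and B0: "0 \<le> 4*a/(1-a)^2 - 3/2*(2449490/1000000)*(1 + 1/a^2)"
  shows "(4*a/(1-a)^2 - 3/2*(2449490/1000000)*(1 + 1/a^2))/(1-a)^2 + 27/8
     + 108*(a*(a+3)^2)/uh^6 - 27/2*(1414214/1000000)*4/(ul^3*a^2)
     + 24*(1732050/1000000)*(a*(a+3))/(uh^3*(1-a)^2) - 27/2*(1414214/1000000)*4/ul^3 \<le> Hf t"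
proof -
  have t0: "0 < t" using assms by auto
  have ul: "ul \<le> u t" using u_lb assms by auto
  have uh: "u t \<le> uh" using u_ub[of uh 1 t] assms by auto
  have up: "0 < u t" by (rule u_pos)
  have s6: "sqrt 2 * sqrt 3 \<le> 2449490/1000000" by (rule s6h)
  have x4: "(1-t)^2 \<le> (1-a)^2" using assms by (intro power_mono; simp)+
  have tt: "t^2 \<le> 1" "a^2 \<le> t^2" using assms sq_mono by (auto simp: power_le_one)
  have "1/t^2 \<le> 1/a^2" using tt assms by (intro frac_le) auto
  then have "t + 1/t^2 \<le> 1 + 1/a^2" using assms by linarith
  then have "(sqrt 2 * sqrt 3)*(t + 1/t^2) \<le> (2449490/1000000)*(1 + 1/a^2)"
    using s6 assms by (intro mult_mono) auto
  moreover have "4*a/(1-a)^2 \<le> 4*t/(1-t)^2" using assms x4 by (intro frac_le) auto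
  ultimately have "4*a/(1-a)^2 - 3/2*(2449490/1000000)*(1 + 1/a^2) \<le> 4*t/(1-t)^2 - 3/2*(sqrt 2 * sqrt 3)*(t + 1/t^2)"
    by linarith
  moreover have "0 \<le> 4*t/(1-t)^2 - 3/2*(sqrt 2 * sqrt 3)*(t + 1/t^2)" using calculation B0 by linarith
  ultimately have "(4*a/(1-a)^2 - 3/2*(2449490/1000000)*(1 + 1/a^2))/(1-a)^2 \<le> (4*t/(1-t)^2 - 3/2*(sqrt 2 * sqrt 3)*(t + 1/t^2))/(1-t)^2"
    using B0 x4 assms by (intro frac_le) auto
  then have 1: "(4*a/(1-a)^2 - 3/2*(2449490/1000000)*(1 + 1/a^2))/(1-a)^2 \<le> 4*t/(1-t)^4 - 3/2*(sqrt 2 * sqrt 3)*(t/(1-t)^2) - 3/2*(sqrt 2 * sqrt 3)/(t^2*(1-t)^2)"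
    using grpH1[of "1-t" t "sqrt 2 * sqrt 3"] assms by auto
  have 4: "27/8 \<le> 27/(8*t^2)" using tt assms by (simp add: field_simps)
  have "(a+3)^2 \<le> (t+3)^2" using assms by (intro power_mono) auto
  then have "a*(a+3)^2 \<le> t*(t+3)^2" using assms by (intro mult_mono) auto
  then have 5: "108*(a*(a+3)^2)/uh^6 \<le> 108*(t*(t+3)^2)/u t^6"
    using assms up uh by (intro frac_le power_mono) auto
  have "27/2 * sqrt 2*(t+3) \<le> 27/2*(1414214/1000000)*4" using s2h assms by (intro mult_mono) auto
  moreover have "ul^3*a^2 \<le> u t^3*t^2" using ul tt assms by (intro mult_mono power_mono) auto
  ultimately have 6: "27/2 * sqrt 2*(t+3)/(u t^3*t^2) \<le> 27/2*(1414214/1000000)*4/(ul^3*a^2)"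
    using assms by (intro frac_le) auto
  have "a*(a+3) \<le> t*(t+3)" using assms by (intro mult_mono) auto
  then have "24*(1732050/1000000)*(a*(a+3)) \<le> 24 * sqrt 3*(t*(t+3))" using s3l assms by (intro mult_mono) auto
  moreover have "u t^3*(1-t)^2 \<le> uh^3*(1-a)^2" using uh up x4 assms by (intro mult_mono power_mono) auto
  ultimately have 7: "24*(1732050/1000000)*(a*(a+3))/(uh^3*(1-a)^2) \<le> 24 * sqrt 3*(t*(t+3))/(u t^3*(1-t)^2)"
    using assms up by (intro frac_le) auto
  have "t*(t+3) \<le> 1*4" using assms by (intro mult_mono) auto
  then have "27/2 * sqrt 2*(t*(t+3)) \<le> 27/2*(1414214/1000000)*4" using s2h assms by (intro mult_mono) auto
  then have 8: "27/2 * sqrt 2*(t*(t+3))/u t^3 \<le> 27/2*(1414214/1000000)*4/ul^3"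
    using ul assms by (intro frac_le power_mono) auto
  show ?thesis using Hf_u[of t] assms t0 1 4 5 6 7 8 by linarith
qed

lemma polyA: "(1 - t + t^2)^2 * (3*t^2+2*t+3)^3 - 27 = (t::real)^2 * (90 - 10*t + 155*t^2 - 12*t^3 + 155*t^4 - 10*t^5 + 90*t^6 + 27*t^8)"
  by (simp add: algebra_simps power2_eq_square power3_eq_cube power4_eq_xxxx eval_nat_numeral)
lemma polyB: "27 - (1 - t - t^2)^2 * (3*t^2+2*t+3)^3 = (t::real)^2 * (18 + 118*t + 97*t^2 + 8*t^3 - 151*t^4 - 242*t^5 - 198*t^6 - 108*t^7 - 27*t^8)"
  by (simp add: algebra_simps power2_eq_square power3_eq_cube power4_eq_xxxx eval_nat_numeral)
lemma polyC: "(1 - t - t^2) * (t^2 + 6*t + 1) * (1-t) - 1 = (t::real) * (4 - 11*t - t^2 + 6*t^3 + t^4)"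
  by (simp add: algebra_simps power2_eq_square power3_eq_cube power4_eq_xxxx eval_nat_numeral)

lemma idN: fixes x t :: real
  assumes "x = 1 - t" "x \<noteq> 0"
  shows "x^4 * (-(((3*t+1)*(t+3))*(1 - t + t^2)^2)/3 + 2/3*((1 - t - t^2)/x) + (2449489/1000000)*((1 - t - t^2)*(t^2 + 6*t + 1))/8 - (2449489/1000000)/(8*x)
     + 1/(3*x^4) - 9/32*t)
   = t * (1886989/2000000 - 14014741/24000000*t - 57291863/6000000*t^2 + 229310731/6000000*t^3
     - 1496886203/24000000*t^4 + 25949489/500000*t^5 - 518045401/24000000*t^6 + 13550511/8000000*t^7 + 8/3*t^8 - t^9)"
proof -
  have "x^4 * (-(((3*t+1)*(t+3))*(1 - t + t^2)^2)/3 + 2/3*((1 - t - t^2)/x) + (2449489/1000000)*((1 - t - t^2)*(t^2 + 6*t + 1))/8 - (2449489/1000000)/(8*x)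
     + 1/(3*x^4) - 9/32*t)
    = x^4 * (-(((3*t+1)*(t+3))*(1 - t + t^2)^2)/3) + 2/3*((1 - t - t^2)*x^3) + 1/8*((2449489/1000000)*((1 - t - t^2)*(t^2 + 6*t + 1)))*x^4 - 1/8*(2449489/1000000)*x^3
     + 1/3 - 9/32*t*x^4"
    using assms(2) by (simp add: field_simps eval_nat_numeral)
  also have "\<dots> = t * (1886989/2000000 - 14014741/24000000*t - 57291863/6000000*t^2 + 229310731/6000000*t^3
     - 1496886203/24000000*t^4 + 25949489/500000*t^5 - 518045401/24000000*t^6 + 13550511/8000000*t^7 + 8/3*t^8 - t^9)"
    unfolding assms(1) by (simp add: field_simps) (simp add: algebra_simps power2_eq_square power3_eq_cube power4_eq_xxxx eval_nat_numeral)
  finally show ?thesis .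
qed

lemma f_small:
  assumes "0 < t" "t \<le> 1/5"
  shows "0 < alpha0 t + sqrt 2/32 * alpha1 t"
proof -
  define U where "U = 1 - t + t^2"
  define L where "L = 1 - t - t^2"
  define P where "P = t^2 + 6*t + 1"
  define R where "R = (3*t+1)*(t+3)"
  define x where "x = 1 - t"
  define A where "A = 1/u t^6"
  define B where "B = 1/u t^3"
  define Y where "Y = 1/x"
  define K where "K = 2 * sqrt 3 * Y + 9/8 * sqrt 2 * P"
  define s6 where "s6 = sqrt 2 * sqrt 3"
  have x0: "0 < x" using assms unfolding x_def by auto
  have up: "0 < u t" by (rule u_pos)
  have pm: "t^n \<le> (1/5)^n" for n using assms by (intro power_mono) auto
  have t2: "t^2 \<le> 1/25" "t^3 \<le> 1/125" "t^4 \<le> 1/625" "t^5 \<le> 1/3125" "t^6 \<le> 1/15625" "t^7 \<le> 1/78125"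
    "t^8 \<le> 1/390625" "t^9 \<le> 1/1953125"
    using pm[of 2] pm[of 3] pm[of 4] pm[of 5] pm[of 6] pm[of 7] pm[of 8] pm[of 9] by (simp_all add: power_divide)
  have tp: "0 \<le> t^2" "0 \<le> t^3" "0 \<le> t^4" "0 \<le> t^5" "0 \<le> t^6" "0 \<le> t^7" "0 \<le> t^8" "0 \<le> t^9"
    using assms by auto
  have qq: "(q t)^3 = (3*t^2+2*t+3)^3" unfolding q_def ..
  have "0 \<le> 90 - 10*t + 155*t^2 - 12*t^3 + 155*t^4 - 10*t^5 + 90*t^6 + 27*t^8"
    using t2 tp assms by linarith
  then have "0 \<le> U^2 * u t^6 - 27" unfolding U_def q3[symmetric] qq polyA using tp by simp
  then have a: "A \<le> U^2/27" unfolding A_def using up by (simp add: field_simps)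
  have "0 \<le> 18 + 118*t + 97*t^2 + 8*t^3 - 151*t^4 - 242*t^5 - 198*t^6 - 108*t^7 - 27*t^8"
    using t2 tp assms by linarith
  then have "0 \<le> 27 - L^2 * u t^6" unfolding L_def q3[symmetric] qq polyB using tp by simp
  then have "(L * u t^3)^2 \<le> (3 * sqrt 3)^2" by (simp add: power_mult_distrib flip: power_mult)
  then have "L * u t^3 \<le> 3 * sqrt 3" by (rule power2_le_imp_le) simp
  then have b: "L/(3 * sqrt 3) \<le> B" unfolding B_def using up by (simp add: field_simps)
  have "0 \<le> 4 - 11*t - t^2 + 6*t^3 + t^4" using t2 tp assms by linarith
  then have "0 \<le> L * P * x - 1" unfolding L_def P_def x_def polyC using assms by simp
  then have c: "0 \<le> L * P - Y" unfolding Y_def using x0 by (simp add: field_simps)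
  have t1: "t < 1" using assms by auto
  have R0: "0 \<le> R" unfolding R_def using assms by simp
  have "R*(1/u t^6) \<le> R*(U^2/27)" using a R0 unfolding A_def by (rule mult_left_mono)
  then have 1: "-(R*U^2)/3 \<le> -9*((3*t+1)*(t+3))/u t^6" unfolding R_def by simp
  have K0: "0 \<le> 2 * sqrt 3/(1-t) + 9/8 * sqrt 2*P" using t1 assms unfolding P_def by simp
  have "L/(3 * sqrt 3) * (2 * sqrt 3/(1-t) + 9/8 * sqrt 2*P) \<le> (1/u t^3) * (2 * sqrt 3/(1-t) + 9/8 * sqrt 2*P)"
    using b K0 unfolding B_def by (rule mult_right_mono)
  moreover have "L/(3 * sqrt 3) * (2 * sqrt 3/(1-t) + 9/8 * sqrt 2*P) = 2/3*(L/(1-t)) + (sqrt 2 * sqrt 3)*(L*P)/8"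
  proof -
    have "sqrt 3 * sqrt 3 = 3" by simp
    then show ?thesis using t1 by (simp add: field_simps)
  qed
  moreover have "(1/u t^3) * (2 * sqrt 3/(1-t) + 9/8 * sqrt 2*P) = 2 * sqrt 3/(u t^3*(1-t)) + 9/8 * sqrt 2*(t^2+6*t+1)/u t^3"
    unfolding P_def using t1 up by (simp add: field_simps)
  ultimately have 2: "2/3*(L/(1-t)) + (sqrt 2 * sqrt 3)*(L*P)/8 \<le> 2 * sqrt 3/(u t^3*(1-t)) + 9/8 * sqrt 2*(t^2+6*t+1)/u t^3"
    by simp
  have "(2449489/1000000)*(L*P - 1/(1-t)) \<le> (sqrt 2 * sqrt 3)*(L*P - 1/(1-t))"
    using c s6l unfolding Y_def x_def by (intro mult_right_mono) auto
  then have m: "(2449489/1000000)*(L*P - 1/(1-t))/8 \<le> (sqrt 2 * sqrt 3)*(L*P - 1/(1-t))/8"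
    by (rule divide_right_mono) simp
  have e1: "(sqrt 2 * sqrt 3)*(L*P)/8 - (sqrt 2 * sqrt 3)/(8*(1-t)) = (sqrt 2 * sqrt 3)*(L*P - 1/(1-t))/8"
    using t1 by (simp add: field_simps)
  have e2: "(2449489/1000000)*(L*P)/8 - (2449489/1000000)/(8*(1-t)) = (2449489/1000000)*(L*P - 1/(1-t))/8"
    using t1 by (simp add: field_simps)
  have 3: "(2449489/1000000)*(L*P)/8 - (2449489/1000000)/(8*(1-t)) \<le> (sqrt 2 * sqrt 3)*(L*P)/8 - (sqrt 2 * sqrt 3)/(8*(1-t))"
    unfolding e1 e2 by (rule m)
  define Phi where "Phi = -(R*U^2)/3 + 2/3*(L/(1-t)) + (2449489/1000000)*(L*P)/8 - (2449489/1000000)/(8*(1-t)) + 1/(3*(1-t)^4) - 9/32*t"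
  have le: "Phi \<le> alpha0 t + sqrt 2/32 * alpha1 t"
    unfolding f_u[OF assms(1) t1] Phi_def using 1 2 3 by linarith
  have "x^4 * Phi = t * (1886989/2000000 - 14014741/24000000*t - 57291863/6000000*t^2 + 229310731/6000000*t^3
     - 1496886203/24000000*t^4 + 25949489/500000*t^5 - 518045401/24000000*t^6 + 13550511/8000000*t^7 + 8/3*t^8 - t^9)"
    unfolding Phi_def R_def U_def L_def P_def x_def using idN[of "1-t" t] x0 x_def by simp
  moreover have "0 < 1886989/2000000 - 14014741/24000000*t - 57291863/6000000*t^2 + 229310731/6000000*t^3
     - 1496886203/24000000*t^4 + 25949489/500000*t^5 - 518045401/24000000*t^6 + 13550511/8000000*t^7 + 8/3*t^8 - t^9"
    using t2 tp assms by linarith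
  ultimately have "0 < x^4 * Phi" using assms by simp
  then have "0 < Phi" using x0 by (simp add: zero_less_mult_iff)
  then show ?thesis using le by linarith
qed

lemma d_p1: "x \<noteq> 1 \<Longrightarrow> ((\<lambda>t. t/(1-t)^4) has_real_derivative (1/(1-x)^4 + 4*x/((1-x)^4*(1-x)))) (at x)"
proof -
  assume "x \<noteq> 1"
  then have h: "1 - x \<noteq> 0" by simp
  show ?thesis
    using h by (auto intro!: derivative_eq_intros simp: field_simps power_Suc[symmetric])
qed
lemma d_p4: "x \<noteq> 0 \<Longrightarrow> ((\<lambda>t. 1/t^2) has_real_derivative (-2/(x^2*x))) (at x)"
  by (auto intro!: derivative_eq_intros simp: field_simps power_Suc[symmetric])
lemma d_p2: "x \<noteq> 1 \<Longrightarrow> ((\<lambda>t. t/(1-t)^2) has_real_derivative (1/(1-x)^2 + 2*x/((1-x)^2*(1-x)))) (at x)"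
proof -
  assume "x \<noteq> 1"
  then have h: "1 - x \<noteq> 0" by simp
  show ?thesis
    using h apply (auto intro!: derivative_eq_intros simp: field_simps power_Suc[symmetric])
    apply (simp add: algebra_simps eval_nat_numeral)
    done
qed
lemma d_p3: "x \<noteq> 1 \<Longrightarrow> x \<noteq> 0 \<Longrightarrow> ((\<lambda>t. 1/(t^2*(1-t)^2)) has_real_derivative (2*(2*x-1)/((x^2*x)*((1-x)^2*(1-x))))) (at x)"
proof -
  assume "x \<noteq> 1" "x \<noteq> 0"
  then have h: "1 - x \<noteq> 0" "x \<noteq> 0" by simp_all
  show ?thesis
    using h apply (auto intro!: derivative_eq_intros simp: field_simps power_Suc[symmetric])
    apply (simp add: algebra_simps eval_nat_numeral)
    done
qed
lemma dq: "(q has_real_derivative (6*x+2)) (at x within S)"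
  unfolding q_def[abs_def] by (auto intro!: derivative_eq_intros)
lemma d_p5: "((\<lambda>t. (t*(t+3)^2)/(q t)^3) has_real_derivative
   (((3*x^2+12*x+9)*q x - 3*(x*(x+3)^2)*(6*x+2))/((q x)^3 * q x))) (at x)"
proof -
  have "q x \<noteq> 0" using q_pos[of x] by simp
  then show ?thesis
    apply (auto intro!: derivative_eq_intros dq simp: field_simps power_Suc[symmetric])
    apply (simp add: algebra_simps eval_nat_numeral)
    done
qed

definition Rp :: "real \<Rightarrow> real" where
  "Rp t = 4*(t/(1-t)^4) - 3/2*((sqrt 2 * sqrt 3)*(t/(1-t)^2)) - 3/2*((sqrt 2 * sqrt 3)*(1/(t^2*(1-t)^2)))
     + 27/8*(1/t^2) + 108*((t*(t+3)^2)/(q t)^3)"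
definition Rd :: "real \<Rightarrow> real" where
  "Rd x = 4*(1/(1-x)^4 + 4*x/((1-x)^4*(1-x))) - 3/2*((sqrt 2 * sqrt 3)*(1/(1-x)^2 + 2*x/((1-x)^2*(1-x))))
     - 3/2*((sqrt 2 * sqrt 3)*(2*(2*x-1)/((x^2*x)*((1-x)^2*(1-x))))) + 27/8*(-2/(x^2*x))
     + 108*(((3*x^2+12*x+9)*q x - 3*(x*(x+3)^2)*(6*x+2))/((q x)^3 * q x))"

lemma Rp_deriv: "x \<noteq> 0 \<Longrightarrow> x \<noteq> 1 \<Longrightarrow> (Rp has_real_derivative Rd x) (at x)"
  unfolding Rp_def[abs_def] Rd_def
  by (intro DERIV_add DERIV_diff DERIV_cmult d_p1 d_p2 d_p3 d_p4 d_p5) auto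

lemma Rd_pos:
  assumes "1/2 \<le> x" "x \<le> 11/20"
  shows "0 < Rd x"
proof -
  have y: "1-x \<le> 1/2" "9/20 \<le> 1-x" "0 < 1-x" using assms by auto
  have x0: "0 < x" using assms by auto
  have "(1-x)^4 \<le> (1/2)^4" using y by (intro power_mono) auto
  then have "1/(1/2)^4 \<le> 1/(1-x)^4" using y by (intro frac_le) auto
  then have a1: "16 \<le> 1/(1-x)^4" by (simp add: power_divide)
  have "(1-x)^4*(1-x) \<le> (1/2)^4*(1/2)" using y by (intro mult_mono power_mono) auto
  then have "4*(1/2)/((1/2)^4*(1/2)) \<le> 4*x/((1-x)^4*(1-x))" using y assms by (intro frac_le) auto
  then have a2: "64 \<le> 4*x/((1-x)^4*(1-x))" by (simp add: power_divide)
  have "(9/20)^2 \<le> (1-x)^2" using y by (intro power_mono) auto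
  then have "1/(1-x)^2 \<le> 1/(9/20)^2" using y by (intro frac_le) auto
  moreover have "(9/20)^2*(9/20) \<le> (1-x)^2*(1-x)" using y by (intro mult_mono power_mono) auto
  then have "2*x/((1-x)^2*(1-x)) \<le> 2*(11/20)/((9/20)^2*(9/20))" using y assms by (intro frac_le) auto
  ultimately have b1: "1/(1-x)^2 + 2*x/((1-x)^2*(1-x)) \<le> 12400/729" by (simp add: power_divide)
  have b1': "0 \<le> 1/(1-x)^2 + 2*x/((1-x)^2*(1-x))" using y x0 by simp
  have "((1/2)^2*(1/2))*((9/20)^2*(9/20)) \<le> (x^2*x)*((1-x)^2*(1-x))"
    using y assms by (intro mult_mono power_mono) auto
  then have "2*(2*x-1)/((x^2*x)*((1-x)^2*(1-x))) \<le> 2*(1/10)/(((1/2)^2*(1/2))*((9/20)^2*(9/20)))"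
    using y assms by (intro frac_le) auto
  then have b2: "2*(2*x-1)/((x^2*x)*((1-x)^2*(1-x))) \<le> 12800/729" by (simp add: power_divide)
  have b2': "0 \<le> 2*(2*x-1)/((x^2*x)*((1-x)^2*(1-x)))" using y assms by simp
  have "(1/2)^2*(1/2) \<le> x^2*x" using assms by (intro mult_mono power_mono) auto
  then have "2/(x^2*x) \<le> 2/((1/2)^2*(1/2))" using assms by (intro frac_le) auto
  then have c: "-16 \<le> -2/(x^2*x)" by (simp add: power_divide)
  have N: "(3*x^2+12*x+9)*q x - 3*(x*(x+3)^2)*(6*x+2) = 27 - 9*x^4 - 72*x^3 - 138*x^2"
    unfolding q_def by (simp add: algebra_simps power2_eq_square power3_eq_cube power4_eq_xxxx eval_nat_numeral)
  have "x^2 \<le> (11/20)^2" "x^3 \<le> (11/20)^3" "x^4 \<le> (11/20)^4" using assms by (intro power_mono; simp)+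
  then have Nb: "-4407609/160000 \<le> 27 - 9*x^4 - 72*x^3 - 138*x^2" by (simp add: power_divide)
  have qx: "19/4 \<le> q x" using q_mono[of "1/2" x] assms by (simp add: q_def power_divide)
  define Qx where "Qx = (q x)^3 * q x"
  define NN where "NN = 27 - 9*x^4 - 72*x^3 - 138*x^2"
  have "(19/4)^3*(19/4) \<le> Qx" unfolding Qx_def using qx by (intro mult_mono power_mono) auto
  then have A: "(4407609/160000)/Qx \<le> (4407609/160000)/((19/4)^3*(19/4))"
    by (intro frac_le) auto
  have Qp: "0 < Qx" unfolding Qx_def using q_pos[of x] by simp
  have B: "0 \<le> (4407609/160000 + NN) / Qx"
    using Nb Qp unfolding NN_def by (intro divide_nonneg_pos) auto
  have C: "(4407609/160000 + NN) / Qx = (4407609/160000)/Qx + NN/Qx" by (rule add_divide_distrib)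
  have D: "(4407609/160000)/((19/4)^3*(19/4)) = (4407609/81450625::real)" by (simp add: power_divide)
  have d: "-4407609/81450625 \<le> (27 - 9*x^4 - 72*x^3 - 138*x^2)/((q x)^3 * q x)"
    using A B C D unfolding Qx_def[symmetric] NN_def[symmetric] by linarith
  have s6: "(sqrt 2 * sqrt 3)*(1/(1-x)^2 + 2*x/((1-x)^2*(1-x))) \<le> (2449490/1000000)*(12400/729)"
    using s6h b1 b1' by (intro mult_mono) auto
  have s6': "(sqrt 2 * sqrt 3)*(2*(2*x-1)/((x^2*x)*((1-x)^2*(1-x)))) \<le> (2449490/1000000)*(12800/729)"
    using s6h b2 b2' by (intro mult_mono) auto
  have key: "0 < 4*(A+B) - 3/2*E - 3/2*F + 27/8*C + 108*D"
    if "16 \<le> A" "64 \<le> B" "-16 \<le> C" "-4407609/81450625 \<le> D"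
       "E \<le> (2449490/1000000)*(12400/729)" "F \<le> (2449490/1000000)*(12800/729)"
    for A B C D E F :: real
    using that unfolding distrib_left by linarith
  show ?thesis unfolding Rd_def N by (rule key[OF a1 a2 c d s6 s6'])
qed

definition S1 :: "real \<Rightarrow> real" where "S1 t = - 27/2 * sqrt 2*(t+3)/(u t^3*t^2)"
definition Wf :: "real \<Rightarrow> real" where "Wf t = t*(t+3)/u t^3"
definition Gf :: "real \<Rightarrow> real" where "Gf t = 24 * sqrt 3/(1-t)^2 - 27/2 * sqrt 2"

lemma Hf_dec: assumes "0 < t" "t < 1" shows "Hf t = Rp t + S1 t + Wf t * Gf t"
proof -
  have h: "inverse (1-t) * (1-t) = 1" "inverse t * t = 1" "sqrt 2 ^2 = 2" "sqrt 3^2 = 3"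
    using assms by auto
  show ?thesis unfolding Hf_u[OF assms] Rp_def S1_def Wf_def Gf_def q3
    apply (simp only: divide_inverse inverse_mult_distrib power_inverse[symmetric])
    apply (simp add: algebra_simps)
    done
qed

lemma u_mono: "0 \<le> t \<Longrightarrow> t \<le> s \<Longrightarrow> u t \<le> u s"
  unfolding u_def by (intro real_sqrt_le_mono q_mono)

lemma S1_mono: assumes "0 < t" "t \<le> s" shows "S1 t \<le> S1 s"
proof -
  have s0: "0 < s" using assms by auto
  have "1/s \<le> 1/t" using assms by (intro frac_le) auto
  moreover have "3/s^2 \<le> 3/t^2" using assms by (intro frac_le power_mono) auto
  ultimately have "(s+3)/s^2 \<le> (t+3)/t^2" using assms s0 by (simp add: add_divide_distrib power2_eq_square)
  moreover have "1/u s^3 \<le> 1/u t^3" using u_mono[of t s] u_pos[of t] assms by (intro frac_le power_mono) auto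
  ultimately have "(s+3)/s^2 * (1/u s^3) \<le> (t+3)/t^2 * (1/u t^3)"
    using assms s0 u_pos[of s] by (intro mult_mono) auto
  then have "27/2 * sqrt 2 * ((s+3)/s^2 * (1/u s^3)) \<le> 27/2 * sqrt 2 * ((t+3)/t^2 * (1/u t^3))"
    by (intro mult_left_mono) auto
  then show ?thesis unfolding S1_def by (simp add: field_simps)
qed

lemma d_g: "((\<lambda>t. (t*(t+3))^2/(q t)^3) has_real_derivative
   ((2*(x*(x+3))*(2*x+3))*q x - 3*(x*(x+3))^2*(6*x+2))/((q x)^3 * q x)) (at x)"
proof -
  have "q x \<noteq> 0" using q_pos[of x] by simp
  then show ?thesis
    apply (auto intro!: derivative_eq_intros dq simp: field_simps power_Suc[symmetric])
    apply (simp add: algebra_simps eval_nat_numeral)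
    done
qed

lemma Wf_mono: assumes "1/2 \<le> t" "t \<le> s" "s \<le> 11/20" shows "Wf t \<le> Wf s"
proof -
  have "(\<lambda>t. (t*(t+3))^2/(q t)^3) t \<le> (\<lambda>t. (t*(t+3))^2/(q t)^3) s"
  proof (rule DERIV_nonneg_imp_nondecreasing[OF assms(2)])
    fix x assume x: "t \<le> x" "x \<le> s"
    have num: "(2*(x*(x+3))*(2*x+3))*q x - 3*(x*(x+3))^2*(6*x+2) = (x*(x+3))*(18 + 6*x - 34*x^2 - 6*x^3)"
      unfolding q_def by (simp add: algebra_simps power2_eq_square power3_eq_cube)
    have "x^2 \<le> (11/20)^2" "x^3 \<le> (11/20)^3" using x assms by (intro power_mono; simp)+
    then have "0 \<le> 18 + 6*x - 34*x^2 - 6*x^3" using x assms by (simp add: power_divide)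
    moreover have "0 \<le> x*(x+3)" using x assms by simp
    ultimately have "0 \<le> ((2*(x*(x+3))*(2*x+3))*q x - 3*(x*(x+3))^2*(6*x+2))/((q x)^3 * q x)"
      unfolding num using q_pos[of x] by simp
    then show "\<exists>y. ((\<lambda>t. (t*(t+3))^2/(q t)^3) has_real_derivative y) (at x) \<and> 0 \<le> y"
      using d_g by blast
  qed
  then have "(t*(t+3))^2/(q t)^3 \<le> (s*(s+3))^2/(q s)^3" by simp
  then have "(Wf t)^2 \<le> (Wf s)^2" unfolding Wf_def q3 by (simp add: power_divide power_mult[symmetric])
  moreover have "0 \<le> Wf s" unfolding Wf_def using assms u_pos[of s] by simp
  ultimately show ?thesis by (rule power2_le_imp_le)
qed

lemma S2_mono: assumes "1/2 \<le> t" "t \<le> s" "s \<le> 11/20" shows "Wf t * Gf t \<le> Wf s * Gf s"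
proof -
  have "(1-s)^2 \<le> (1-t)^2" using assms by (intro power_mono) auto
  then have "24 * sqrt 3/(1-t)^2 \<le> 24 * sqrt 3/(1-s)^2" using assms by (intro frac_le) auto
  then have G: "Gf t \<le> Gf s" unfolding Gf_def by simp
  have "(1-t)^2 \<le> 1" using assms by (simp add: power_le_one)
  then have "24 * sqrt 3 \<le> 24 * sqrt 3/(1-t)^2" using assms by (simp add: field_simps)
  moreover have "27/2 * sqrt 2 \<le> 24 * sqrt 3"
  proof -
    have "sqrt 2 \<le> sqrt 3" by simp
    moreover have "0 \<le> sqrt 2" by simp
    ultimately show ?thesis by linarith
  qed
  ultimately have G0: "0 \<le> Gf t" unfolding Gf_def by linarith
  have W0: "0 \<le> Wf s" unfolding Wf_def using assms u_pos[of s] by simp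
  show ?thesis using Wf_mono[OF assms] G W0 G0 by (intro mult_mono) auto
qed

lemma Hf_strict: assumes "1/2 \<le> t" "t < s" "s \<le> 11/20" shows "Hf t < Hf s"
proof -
  have "Rp t < Rp s"
  proof (rule DERIV_pos_imp_increasing[OF assms(2)])
    fix x assume x: "t \<le> x" "x \<le> s"
    show "\<exists>y. (Rp has_real_derivative y) (at x) \<and> 0 < y"
      using Rp_deriv[of x] Rd_pos[of x] x assms by auto
  qed
  moreover have "S1 t \<le> S1 s" using assms by (intro S1_mono) auto
  moreover have "Wf t * Gf t \<le> Wf s * Gf s" using assms by (intro S2_mono) auto
  ultimately show ?thesis using Hf_dec[of t] Hf_dec[of s] assms by auto
qed

lemma Hf_cont: "continuous_on {1/2..11/20} Hf"
proof -
  have "continuous_on {1/2..11/20} (\<lambda>t. Rp t + S1 t + Wf t * Gf t)"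
    unfolding Rp_def S1_def Wf_def Gf_def u_def
  proof (intro continuous_intros ballI)
    fix x :: real assume x: "x \<in> {1/2..11/20}"
    then show "(1-x)^4 \<noteq> 0" "(1-x)^2 \<noteq> 0" "x^2*(1-x)^2 \<noteq> 0" "x^2 \<noteq> 0" "(q x)^3 \<noteq> 0"
      "sqrt (q x)^3 * x^2 \<noteq> 0" "sqrt (q x)^3 \<noteq> 0" using q_pos[of x] by auto
  qed (auto simp: q_def[abs_def] intro!: continuous_intros)
  then show ?thesis
    by (rule continuous_on_cong[THEN iffD1, rotated 2]) (auto simp: Hf_dec)
qed

lemma A1_neg: assumes "0 \<le> a" "a \<le> t" "t \<le> b" "0 < t" "t < 1" "a < 1" "0 < ul" "ul^2 \<le> q a"
  and "0 < 9/2*(1414213/1000000)*a - 36*(b^2+6*b+1)/ul^3 + 4*(1732050/1000000)/(1-a) + 9/2*(1414213/1000000)/b^2" shows "alpha1 t < 0"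
  using A1_lb[OF assms(1-8)] assms(9) by linarith
lemma A0_pos: assumes "0 \<le> a" "a \<le> t" "t \<le> b" "0 < t" "t < 1" "a < 1" "0 < ul" "ul^2 \<le> q a" "0 < uh" "q b \<le> uh^2"
  and "0 < -9*((3*b+1)*(b+3))/ul^6 + 2*(1732050/1000000)/(uh^3*(1-a)) + 9/(32*b^2) + 1/(3*(1-a)^4)" shows "0 < alpha0 t"
  using A0_lb[OF assms(1-10)] assms(11) by linarith
lemma F_pos: assumes "0 \<le> a" "a \<le> t" "t \<le> b" "0 < t" "t < 1" "a < 1" "0 < ul" "ul^2 \<le> q a" "0 < uh" "q b \<le> uh^2"
    "0 \<le> 1/(3*(1-a)^3) - (2449490/1000000)/8"
  and "0 < -9*((3*b+1)*(b+3))/ul^6 + 2*(1732050/1000000)/(uh^3*(1-a)) - 9/32*b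
     + 9/8*(1414213/1000000)*(a^2+6*a+1)/uh^3 + (1/(1-a))*(1/(3*(1-a)^3) - (2449490/1000000)/8)" shows "0 < alpha0 t + sqrt 2/32 * alpha1 t"
  using F_lb[OF assms(1-11)] assms(12) by linarith
lemma Hu_neg: assumes "0 \<le> a" "a \<le> t" "t \<le> b" "0 < t" "b < 1" "0 < ul" "ul^2 \<le> q a" "0 < uh" "q b \<le> uh^2"
    "27/8 - 3/2*(2449489/1000000)/(1-a)^2 \<le> 0"
  and "4*b/(1-b)^4 - 3/2*(2449489/1000000)*a/(1-a)^2 + (27/8 - 3/2*(2449489/1000000)/(1-a)^2)/b^2
     + 108*(b*(b+3)^2)/ul^6 - 27/2*(1414213/1000000)*(a+3)/(uh^3*b^2)
     + 24*(1732051/1000000)*(b*(b+3))/(ul^3*(1-b)^2) - 27/2*(1414213/1000000)*(a*(a+3))/uh^3 < 0" shows "Hf t < 0"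
  using Hu_ub[OF assms(1-10)] assms(11) by linarith
lemma Hl_pos: assumes "0 < a" "a \<le> t" "t \<le> b" "b < 1" "0 < ul" "ul^2 \<le> q a" "0 < uh" "q b \<le> uh^2"
  and "0 < 4*a/(1-a)^4 - 3/2*(2449490/1000000)*b/(1-b)^2 - 3/2*(2449490/1000000)/(a^2*(1-b)^2) + 27/(8*b^2)
     + 108*(a*(a+3)^2)/uh^6 - 27/2*(1414214/1000000)*(b+3)/(ul^3*a^2)
     + 24*(1732050/1000000)*(a*(a+3))/(uh^3*(1-a)^2) - 27/2*(1414214/1000000)*(b*(b+3))/ul^3" shows "0 < Hf t"
  using Hl_lb[OF assms(1-8)] assms(9) by linarith
lemma Hl1_pos: assumes "0 < a" "a \<le> t" "t < 1" "0 < ul" "ul^2 \<le> q a" "0 < uh" "q 1 \<le> uh^2"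
    "0 \<le> 4*a/(1-a)^2 - 3/2*(2449490/1000000)*(1 + 1/a^2)"
  and "0 < (4*a/(1-a)^2 - 3/2*(2449490/1000000)*(1 + 1/a^2))/(1-a)^2 + 27/8
     + 108*(a*(a+3)^2)/uh^6 - 27/2*(1414214/1000000)*4/(ul^3*a^2)
     + 24*(1732050/1000000)*(a*(a+3))/(uh^3*(1-a)^2) - 27/2*(1414214/1000000)*4/ul^3" shows "0 < Hf t"
  using Hl1_lb[OF assms(1-8)] assms(9) by linarith

lemma alpha1_neg_all:
  assumes "0 < t" "t < 1"
  shows "alpha1 t < 0"
proof -
  consider (c0) "t \<le> (1/4)" | (c1) "(1/4) \<le> t" "t \<le> (219/500)" | (c2) "(219/500) \<le> t" "t \<le> (289/500)" | (c3) "(289/500) \<le> t" using assms by linarith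
  then show ?thesis
  proof cases
    case c0
    show ?thesis
      by (rule A1_neg[where a="0" and b="(1/4)" and ul="(34641/20000)"]) (use assms c0 in \<open>simp_all add: q_def power_divide\<close>)
  next
    case c1
    show ?thesis
      by (rule A1_neg[where a="(1/4)" and b="(219/500)" and ul="(48007/25000)"]) (use assms c1 in \<open>simp_all add: q_def power_divide\<close>)
  next
    case c2
    show ?thesis
      by (rule A1_neg[where a="(219/500)" and b="(289/500)" and ul="(105493/50000)"]) (use assms c2 in \<open>simp_all add: q_def power_divide\<close>)
  next
    case c3
    show ?thesis
      by (rule A1_neg[where a="(289/500)" and b="1" and ul="(227117/100000)"]) (use assms c3 in \<open>simp_all add: q_def power_divide\<close>)
  qed
qed

lemma alpha0_pos_all:
  assumes "0 < t" "t < 1"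
  shows "0 < alpha0 t"
proof -
  consider (c0) "t \<le> (1/4)" | (c1) "(1/4) \<le> t" "t \<le> (219/500)" | (c2) "(219/500) \<le> t" using assms by linarith
  then show ?thesis
  proof cases
    case c0
    show ?thesis
      by (rule A0_pos[where a="0" and b="(1/4)" and ul="(34641/20000)" and uh="(192029/100000)"]) (use assms c0 in \<open>simp_all add: q_def power_divide\<close>)
  next
    case c1
    show ?thesis
      by (rule A0_pos[where a="(1/4)" and b="(219/500)" and ul="(48007/25000)" and uh="(210987/100000)"]) (use assms c1 in \<open>simp_all add: q_def power_divide\<close>)
  next
    case c2
    show ?thesis
      by (rule A0_pos[where a="(219/500)" and b="1" and ul="(105493/50000)" and uh="(282843/100000)"]) (use assms c2 in \<open>simp_all add: q_def power_divide\<close>)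
  qed
qed

lemma f_pos_all:
  assumes "0 < t" "t < 1"
  shows "0 < alpha0 t + sqrt 2/32 * alpha1 t"
proof -
  consider (c0) "t \<le> 1/5" | (c1) "(1/5) \<le> t" "t \<le> (3/10)" | (c2) "(3/10) \<le> t" "t \<le> (2/5)" | (c3) "(2/5) \<le> t" using assms by linarith
  then show ?thesis
  proof cases
    case c0
    show ?thesis using f_small c0 assms by auto
  next
    case c1
    show ?thesis
      by (rule F_pos[where a="(1/5)" and b="(3/10)" and ul="(5863/3125)" and uh="(49181/25000)"]) (use assms c1 in \<open>simp_all add: q_def power_divide\<close>)
  next
    case c2
    show ?thesis
      by (rule F_pos[where a="(3/10)" and b="(2/5)" and ul="(196723/100000)" and uh="(103441/50000)"]) (use assms c2 in \<open>simp_all add: q_def power_divide\<close>)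
  next
    case c3
    show ?thesis
      by (rule F_pos[where a="(2/5)" and b="1" and ul="(206881/100000)" and uh="(282843/100000)"]) (use assms c3 in \<open>simp_all add: q_def power_divide\<close>)
  qed
qed

lemma Hf_neg_all:
  assumes "0 < t" "t \<le> 1/2"
  shows "Hf t < 0"
proof -
  consider (c0) "t \<le> (1/4)" | (c1) "(1/4) \<le> t" "t \<le> (3/8)" | (c2) "(3/8) \<le> t" "t \<le> (219/500)" | (c3) "(219/500) \<le> t" "t \<le> (469/1000)" | (c4) "(469/1000) \<le> t" using assms by linarith
  then show ?thesis
  proof cases
    case c0
    show ?thesis
      by (rule Hu_neg[where a="0" and b="(1/4)" and ul="(34641/20000)" and uh="(192029/100000)"]) (use assms c0 in \<open>simp_all add: q_def power_divide\<close>)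
  next
    case c1
    show ?thesis
      by (rule Hu_neg[where a="(1/4)" and b="(3/8)" and ul="(48007/25000)" and uh="(51063/25000)"]) (use assms c1 in \<open>simp_all add: q_def power_divide\<close>)
  next
    case c2
    show ?thesis
      by (rule Hu_neg[where a="(3/8)" and b="(219/500)" and ul="(204251/100000)" and uh="(210987/100000)"]) (use assms c2 in \<open>simp_all add: q_def power_divide\<close>)
  next
    case c3
    show ?thesis
      by (rule Hu_neg[where a="(219/500)" and b="(469/1000)" and ul="(105493/50000)" and uh="(214427/100000)"]) (use assms c3 in \<open>simp_all add: q_def power_divide\<close>)
  next
    case c4
    show ?thesis
      by (rule Hu_neg[where a="(469/1000)" and b="(1/2)" and ul="(107213/50000)" and uh="(43589/20000)"]) (use assms c4 in \<open>simp_all add: q_def power_divide\<close>)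
  qed
qed

lemma Hf_pos_all:
  assumes "11/20 \<le> t" "t \<le> 9/10"
  shows "0 < Hf t"
proof -
  consider (c0) "t \<le> (143/250)" | (c1) "(143/250) \<le> t" "t \<le> (297/500)" | (c2) "(297/500) \<le> t" "t \<le> (319/500)" | (c3) "(319/500) \<le> t" "t \<le> (29/40)" | (c4) "(29/40) \<le> t" "t \<le> (203/250)" | (c5) "(203/250) \<le> t" using assms by linarith
  then show ?thesis
  proof cases
    case c0
    show ?thesis
      by (rule Hl_pos[where a="(11/20)" and b="(143/250)" and ul="(111887/50000)" and uh="(226397/100000)"]) (use assms c0 in \<open>simp_all add: q_def power_divide\<close>)
  next
    case c1
    show ?thesis
      by (rule Hl_pos[where a="(143/250)" and b="(297/500)" and ul="(56599/25000)" and uh="(229053/100000)"]) (use assms c1 in \<open>simp_all add: q_def power_divide\<close>)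
  next
    case c2
    show ?thesis
      by (rule Hl_pos[where a="(297/500)" and b="(319/500)" and ul="(57263/25000)" and uh="(11723/5000)"]) (use assms c2 in \<open>simp_all add: q_def power_divide\<close>)
  next
    case c3
    show ?thesis
      by (rule Hl_pos[where a="(319/500)" and b="(29/40)" and ul="(234459/100000)" and uh="(245497/100000)"]) (use assms c3 in \<open>simp_all add: q_def power_divide\<close>)
  next
    case c4
    show ?thesis
      by (rule Hl_pos[where a="(29/40)" and b="(203/250)" and ul="(30687/12500)" and uh="(51389/20000)"]) (use assms c4 in \<open>simp_all add: q_def power_divide\<close>)
  next
    case c5
    show ?thesis
      by (rule Hl_pos[where a="(203/250)" and b="(9/10)" and ul="(16059/6250)" and uh="(268887/100000)"]) (use assms c5 in \<open>simp_all add: q_def power_divide\<close>)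
  qed
qed

lemma Hf_pos_end: assumes "11/20 \<le> t" "t < 1" shows "0 < Hf t"
proof (cases "t \<le> 9/10")
  case True then show ?thesis using Hf_pos_all assms by auto
next
  case False
  show ?thesis
    by (rule Hl1_pos[where a="9/10" and ul="134443/50000" and uh="282843/100000"])
       (use assms False in \<open>simp_all add: q_def power_divide\<close>)
qed

theorem lemma4:
  shows "(\<forall>t\<in>{0<..<1}. \<forall>c. det (T1 c t) = alpha1 t * c + alpha0 t)
    \<and> (\<forall>t\<in>{0<..<1}. alpha1 t < 0)
    \<and> (\<forall>t\<in>{0<..<1}. alpha0 t > 0)
    \<and> (\<forall>t\<in>{0<..<1}. cfun t > 0)
    \<and> (\<forall>t\<in>{0<..<1}. T1_11 (cfun t) t > 0)
    \<and> (\<exists>\<delta><1. (\<forall>t\<in>{0<..<\<delta>}. T1_12 (cfun t) t < 0)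
                \<and> (\<forall>t\<in>{\<delta><..<1}. T1_12 (cfun t) t > 0))"
proof -
  have D: "\<forall>t\<in>{0<..<1}. \<forall>c. det (T1 c t) = alpha1 t * c + alpha0 t"
    using det_T1 by auto
  have A1: "\<forall>t\<in>{0<..<1}. alpha1 t < 0" using alpha1_neg_all by auto
  have A0: "\<forall>t\<in>{0<..<1}. alpha0 t > 0" using alpha0_pos_all by auto
  have C: "\<forall>t\<in>{0<..<1}. cfun t > 0"
  proof
    fix t :: real assume t: "t \<in> {0<..<1}"
    then have "alpha1 t < 0" "0 < alpha0 t" using A1 A0 by auto
    then show "cfun t > 0" unfolding cfun_def by (intro divide_neg_neg) auto
  qed
  have T11: "\<forall>t\<in>{0<..<1}. T1_11 (cfun t) t > 0"
  proof
    fix t :: real assume t: "t \<in> {0<..<1}"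
    then have a: "alpha1 t < 0" using A1 by auto
    have f: "0 < alpha0 t + sqrt 2/32 * alpha1 t" using f_pos_all t by auto
    show "T1_11 (cfun t) t > 0" unfolding T11_rel[OF a[THEN less_imp_neq]]
      using a f by (intro divide_pos_pos mult_pos_pos) auto
  qed
  obtain \<delta> where d: "1/2 \<le> \<delta>" "\<delta> \<le> 11/20" "Hf \<delta> = 0"
    using IVT'[of Hf "1/2" 0 "11/20"] Hf_cont Hf_neg_all[of "1/2"] Hf_pos_end[of "11/20"] by force
  have neg: "T1_12 (cfun t) t < 0" if t: "t \<in> {0<..<\<delta>}" for t
  proof -
    have t1: "0 < t" "t < 1" using t d by auto
    have a: "alpha1 t < 0" using A1 t1 by auto
    have "Hf t < 0"
    proof (cases "t \<le> 1/2")
      case True then show ?thesis using Hf_neg_all t1 by auto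
    next
      case False then show ?thesis using Hf_strict[of t \<delta>] d t by auto
    qed
    then show ?thesis unfolding T12_rel[OF a[THEN less_imp_neq]] using a by (intro divide_pos_neg) auto
  qed
  have pos: "T1_12 (cfun t) t > 0" if t: "t \<in> {\<delta><..<1}" for t
  proof -
    have t1: "0 < t" "t < 1" using t d by auto
    have a: "alpha1 t < 0" using A1 t1 by auto
    have "0 < Hf t"
    proof (cases "11/20 \<le> t")
      case True then show ?thesis using Hf_pos_end t1 by auto
    next
      case False then show ?thesis using Hf_strict[of \<delta> t] d t by auto
    qed
    then show ?thesis unfolding T12_rel[OF a[THEN less_imp_neq]] using a by (intro divide_neg_neg) auto
  qed
  have "\<delta> < 1" using d by auto
  then show ?thesis using D A1 A0 C T11 neg pos by blast
qed

end
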